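(* Two quantity spaces over the same field $K$ are isomorphic (as scalable monoids) if and only if they have the same rank.
   Context: A scalable monoid over a (unital, associative) ring $R$ is a monoid $X$ (identity $1_X$, product written $xy$) together with a map $R\times X\to X$, $(\alpha,x)\mapsto\alpha\cdot x$, such that $1\cdot x=x$, $\alpha\cdot(\beta\cdot x)=\alpha\beta\cdot x$ and $\alpha\cdot(xy)=(\alpha\cdot x)y=x(\alpha\cdot y)$. A quantity space over a field $K$ is a commutative scalable monoid $Q$ over $K$ for which there exists a basis, i.e. a finite set $\{e_1,\ldots,e_n\}$ of invertible elements of $Q$ such that every $x\in Q$ has a unique expansion $x=\mu\cdot\prod_{i=1}^n e_i^{k_i}$ with $\mu\in K$ and $k_1,\ldots,k_n\in\mathbb{Z}$. All bases of a quantity space have the same cardinality $n$, called its rank. An isomorphism of scalable monoids $Q\to Q'$ over $K$ is a bijection $\phi$ with $\phi(1_Q)=1_{Q'}$, $\phi(xy)=\phi(x)\phi(y)$ and $\phi(\lambda\cdot x)=\lambda\cdot\phi(x)$ for all $x,y\in Q$, $\lambda\in K$. *)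

theory Defs
  imports Main
begin

text \<open>A quantity space is modelled on a type 'q whose commutative monoid structure
  is given by the type class comm_monoid_mult; the scalar action of the field 'k
  is an explicit operation sc.\<close>

definition scalable_monoid :: "('k::ring_1 \<Rightarrow> 'q::monoid_mult \<Rightarrow> 'q) \<Rightarrow> bool" where
  "scalable_monoid sc \<longleftrightarrow>
     (\<forall>x. sc 1 x = x) \<and>
     (\<forall>a b x. sc a (sc b x) = sc (a * b) x) \<and>
     (\<forall>a x y. sc a (x * y) = sc a x * y \<and> sc a (x * y) = x * sc a y)"

definition invertible :: "'q::monoid_mult \<Rightarrow> bool" where
  "invertible e \<longleftrightarrow> (\<exists>y. e * y = 1 \<and> y * e = 1)"

definition minv :: "'q::monoid_mult \<Rightarrow> 'q" where
  "minv e = (THE y. e * y = 1 \<and> y * e = 1)"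

definition zpow :: "'q::monoid_mult \<Rightarrow> int \<Rightarrow> 'q" where
  "zpow e k = (if 0 \<le> k then e ^ nat k else minv e ^ nat (- k))"

definition expansion :: "('k \<Rightarrow> 'q::comm_monoid_mult \<Rightarrow> 'q) \<Rightarrow> 'q set \<Rightarrow> 'k \<Rightarrow> ('q \<Rightarrow> int) \<Rightarrow> 'q" where
  "expansion sc B \<mu> k = sc \<mu> (\<Prod>e\<in>B. zpow e (k e))"

definition is_basis :: "('k::field \<Rightarrow> 'q::comm_monoid_mult \<Rightarrow> 'q) \<Rightarrow> 'q set \<Rightarrow> bool" where
  "is_basis sc B \<longleftrightarrow>
     finite B \<and> (\<forall>e\<in>B. invertible e) \<and>
     (\<forall>x. \<exists>\<mu> k. x = expansion sc B \<mu> k) \<and>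
     (\<forall>\<mu> k \<mu>' k'. expansion sc B \<mu> k = expansion sc B \<mu>' k' \<longrightarrow>
                    \<mu> = \<mu>' \<and> (\<forall>e\<in>B. k e = k' e))"

definition quantity_space :: "('k::field \<Rightarrow> 'q::comm_monoid_mult \<Rightarrow> 'q) \<Rightarrow> bool" where
  "quantity_space sc \<longleftrightarrow> scalable_monoid sc \<and> (\<exists>B. is_basis sc B)"

definition qrank :: "('k::field \<Rightarrow> 'q::comm_monoid_mult \<Rightarrow> 'q) \<Rightarrow> nat" where
  "qrank sc = card (SOME B. is_basis sc B)"

definition sm_iso :: "('k::ring_1 \<Rightarrow> 'a::monoid_mult \<Rightarrow> 'a) \<Rightarrow> ('k \<Rightarrow> 'b::monoid_mult \<Rightarrow> 'b)
                       \<Rightarrow> ('a \<Rightarrow> 'b) \<Rightarrow> bool" where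
  "sm_iso sa sb \<phi> \<longleftrightarrow> bij \<phi> \<and> \<phi> 1 = 1 \<and> (\<forall>x y. \<phi> (x * y) = \<phi> x * \<phi> y) \<and>
      (\<forall>c x. \<phi> (sa c x) = sb c (\<phi> x))"

end

theory Submission
  imports Defs
begin

lemma sm_facts:
  assumes "scalable_monoid sc"
  shows "sc 1 x = x" "sc a (sc b x) = sc (a * b) x" "sc a (x * y) = sc a x * y"
    "sc a (x * y) = x * sc a y"
  using assms unfolding scalable_monoid_def by metis+

lemma sc_mult:
  assumes "scalable_monoid sc"
  shows "sc a x * sc b y = sc (a * b) (x * y)"
proof -
  have "sc a x * sc b y = sc a (x * sc b y)" using sm_facts(3)[OF assms] by metis
  also have "x * sc b y = sc b (x * y)" using sm_facts(4)[OF assms] by metis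
  finally show ?thesis using sm_facts(2)[OF assms] by metis
qed

lemma minv_right:
  fixes e :: "'q::comm_monoid_mult"
  assumes "invertible e"
  shows "e * minv e = 1"
proof -
  obtain y where y: "e * y = 1" "y * e = 1" using assms unfolding invertible_def by auto
  have "\<exists>!y. e * y = 1 \<and> y * e = 1"
  proof (rule ex1I[of _ y])
    show "e * y = 1 \<and> y * e = 1" using y by simp
    fix z assume "e * z = 1 \<and> z * e = 1"
    then have "z = z * (e * y)" using y by simp
    also have "\<dots> = (z * e) * y" by (simp add: mult.assoc)
    finally show "z = y" using \<open>e * z = 1 \<and> z * e = 1\<close> by simp
  qed
  from theI'[OF this] show ?thesis unfolding minv_def by simp
qed

lemma pow_aux:
  fixes e u :: "'q::comm_monoid_mult"
  assumes "e * u = 1"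
  shows "e ^ a * u ^ b = (if b \<le> a then e ^ (a - b) else u ^ (b - a))"
proof (cases "b \<le> a")
  case True
  have "e ^ a = e ^ (a - b) * e ^ b" using True by (simp add: power_add[symmetric])
  moreover have "e ^ b * u ^ b = 1" by (simp add: power_mult_distrib[symmetric] assms)
  ultimately show ?thesis using True by (simp add: mult.assoc)
next
  case False
  have "u ^ b = u ^ (b - a) * u ^ a" using False by (simp add: power_add[symmetric])
  moreover have "e ^ a * u ^ a = 1" by (simp add: power_mult_distrib[symmetric] assms)
  ultimately have "e ^ a * u ^ b = (e ^ a * u ^ a) * u ^ (b - a)" by (metis mult.assoc mult.commute)
  then show ?thesis using False \<open>e ^ a * u ^ a = 1\<close> by simp
qed

lemma zpow_add:
  fixes e :: "'q::comm_monoid_mult"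
  assumes "invertible e"
  shows "zpow e (i + j) = zpow e i * zpow e j"
proof -
  have eu: "e * minv e = 1" using minv_right[OF assms] .
  show ?thesis
  proof (cases "0 \<le> i")
    case i: True
    show ?thesis
    proof (cases "0 \<le> j")
      case True
      then show ?thesis using i by (simp add: zpow_def nat_add_distrib power_add)
    next
      case False
      then show ?thesis using i pow_aux[OF eu, of "nat i" "nat (-j)"]
        by (auto simp: zpow_def nat_diff_distrib intro!: arg_cong[where f="power _"])
    qed
  next
    case i: False
    show ?thesis
    proof (cases "0 \<le> j")
      case True
      then show ?thesis using i pow_aux[OF eu, of "nat j" "nat (-i)"]
        by (auto simp: zpow_def nat_diff_distrib ac_simps intro!: arg_cong[where f="power _"])
    next
      case False
      then have "nat (- i - j) = nat (-i) + nat (-j)" using i by simp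
      then show ?thesis using i False by (simp add: zpow_def power_add)
    qed
  qed
qed

lemma expansion_mult:
  assumes "scalable_monoid sc" "finite B" "\<forall>e\<in>B. invertible e"
  shows "expansion sc B \<mu> k * expansion sc B \<mu>' k' = expansion sc B (\<mu> * \<mu>') (\<lambda>e. k e + k' e)"
proof -
  have "(\<Prod>e\<in>B. zpow e (k e + k' e)) = (\<Prod>e\<in>B. zpow e (k e)) * (\<Prod>e\<in>B. zpow e (k' e))"
    using assms(3) by (simp add: zpow_add prod.distrib)
  then show ?thesis unfolding expansion_def by (simp add: sc_mult[OF assms(1)])
qed


locale qs =
  fixes sc :: "'k::field \<Rightarrow> 'q::comm_monoid_mult \<Rightarrow> 'q" and B :: "'q set"
  assumes sm: "scalable_monoid sc" and bas: "is_basis sc B"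
begin

lemma finB: "finite B" and invB: "\<forall>e\<in>B. invertible e"
  and ex: "\<exists>\<mu> k. x = expansion sc B \<mu> k"
  and un: "expansion sc B \<mu> k = expansion sc B \<mu>' k' \<Longrightarrow> \<mu> = \<mu>' \<and> (\<forall>e\<in>B. k e = k' e)"
  using bas unfolding is_basis_def by blast+

definition rep :: "'q \<Rightarrow> 'k \<times> ('q \<Rightarrow> int)" where
  "rep x = (SOME p. x = expansion sc B (fst p) (snd p))"
definition scal where "scal x = fst (rep x)"
definition coord where "coord x = snd (rep x)"

lemma rep: "x = expansion sc B (scal x) (coord x)"
proof -
  obtain \<mu> k where "x = expansion sc B \<mu> k" using ex by blast
  then have "\<exists>p. x = expansion sc B (fst p) (snd p)" by (metis fst_conv snd_conv)
  from someI_ex[OF this] show ?thesis unfolding scal_def coord_def rep_def .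
qed

lemma uniq: assumes "x = expansion sc B \<mu> k"
  shows "scal x = \<mu>" "e \<in> B \<Longrightarrow> coord x e = k e"
  using un[of "scal x" "coord x" \<mu> k] rep assms by metis+

lemma exp_cong: "(\<And>e. e \<in> B \<Longrightarrow> k e = k' e) \<Longrightarrow> expansion sc B \<mu> k = expansion sc B \<mu> k'"
  unfolding expansion_def by (metis (no_types, lifting) prod.cong)

lemma eq_iff: "x = y \<longleftrightarrow> scal x = scal y \<and> (\<forall>e\<in>B. coord x e = coord y e)"
  by (metis rep exp_cong)

lemma coord_mult: "e \<in> B \<Longrightarrow> coord (x * y) e = coord x e + coord y e"
  and scal_mult: "scal (x * y) = scal x * scal y"
proof -
  have "x * y = expansion sc B (scal x * scal y) (\<lambda>e. coord x e + coord y e)"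
    using expansion_mult[OF sm finB invB] rep by metis
  then show "e \<in> B \<Longrightarrow> coord (x * y) e = coord x e + coord y e" "scal (x * y) = scal x * scal y"
    using uniq by auto
qed

lemma coord_sc: "e \<in> B \<Longrightarrow> coord (sc a x) e = coord x e"
  and scal_sc: "scal (sc a x) = a * scal x"
proof -
  have "sc a x = expansion sc B (a * scal x) (coord x)"
    using rep[of x] sm_facts(2)[OF sm] unfolding expansion_def by metis
  then show "e \<in> B \<Longrightarrow> coord (sc a x) e = coord x e" "scal (sc a x) = a * scal x"
    using uniq by auto
qed

lemma one_exp: "1 = expansion sc B 1 (\<lambda>_. 0)"
  unfolding expansion_def zpow_def by (simp add: sm_facts(1)[OF sm])

lemma coord_one: "e \<in> B \<Longrightarrow> coord 1 e = 0" and scal_one: "scal 1 = 1"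
  using uniq[OF one_exp] by auto

lemma coord_basis: assumes "b \<in> B" "e \<in> B" shows "coord b e = (if e = b then 1 else 0)"
proof -
  have "(\<Prod>e\<in>B. zpow e (if e = b then 1 else 0)) = (\<Prod>e\<in>B. (if e = b then e else 1))"
    by (rule prod.cong) (auto simp: zpow_def)
  also have "\<dots> = b" using prod.delta[OF finB, of b "\<lambda>e. e"] assms by simp
  finally have "b = expansion sc B 1 (\<lambda>e. if e = b then 1 else 0)"
    unfolding expansion_def by (simp add: sm_facts(1)[OF sm])
  from uniq(2)[OF this assms(2)] show ?thesis .
qed

lemma coord_power: "e \<in> B \<Longrightarrow> coord (y ^ n) e = int n * coord y e"
  by (induction n) (auto simp: coord_one coord_mult algebra_simps)

lemma coord_inv: "y * z = 1 \<Longrightarrow> e \<in> B \<Longrightarrow> coord z e = - coord y e"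
  using coord_mult[of e y z] coord_one[of e] by simp

lemma coord_prod: "finite I \<Longrightarrow> e \<in> B \<Longrightarrow> coord (\<Prod>i\<in>I. f i) e = (\<Sum>i\<in>I. coord (f i) e)"
  by (induction I rule: finite_induct) (auto simp: coord_one coord_mult)

lemma coord_exp: "e \<in> B \<Longrightarrow> coord (expansion sc B \<mu> k) e = k e"
  and scal_exp: "scal (expansion sc B \<mu> k) = \<mu>"
  using uniq by auto

end


lemma hom_prod:
  assumes "\<phi> 1 = 1" "\<forall>x y. \<phi> (x * y) = \<phi> x * \<phi> y" "finite I"
  shows "\<phi> (\<Prod>i\<in>I. f i) = (\<Prod>i\<in>I. \<phi> (f i))"
  using assms(3) by (induction I rule: finite_induct) (auto simp: assms(1,2))

lemma hom_power:
  assumes "\<phi> 1 = 1" "\<forall>x y. \<phi> (x * y) = \<phi> x * \<phi> y"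
  shows "\<phi> (x ^ n) = \<phi> x ^ n"
  by (induction n) (auto simp: assms)

lemma hom_coord:
  fixes sQ :: "'k::field \<Rightarrow> 'a::comm_monoid_mult \<Rightarrow> 'a"
    and sR :: "'k \<Rightarrow> 'b::comm_monoid_mult \<Rightarrow> 'b"
  assumes Q: "qs sQ B" and R: "qs sR C" and h1: "\<phi> 1 = 1"
    and hm: "\<forall>x y. \<phi> (x * y) = \<phi> x * \<phi> y" and hs: "\<forall>c x. \<phi> (sQ c x) = sR c (\<phi> x)"
    and c: "c \<in> C"
  shows "qs.coord sR C (\<phi> x) c = (\<Sum>b\<in>B. qs.coord sQ B x b * qs.coord sR C (\<phi> b) c)"
proof -
  have zp: "qs.coord sR C (\<phi> (zpow b i)) c = i * qs.coord sR C (\<phi> b) c" if b: "b \<in> B" for b i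
  proof (cases "0 \<le> i")
    case True
    then show ?thesis
      by (simp add: zpow_def hom_power[OF h1 hm] qs.coord_power[OF R c])
  next
    case False
    have "b * minv b = 1" using minv_right qs.invB[OF Q] b by blast
    then have "\<phi> b * \<phi> (minv b) = 1" using hm h1 by metis
    then have "qs.coord sR C (\<phi> (minv b)) c = - qs.coord sR C (\<phi> b) c"
      using qs.coord_inv[OF R _ c] by blast
    then show ?thesis using False
      by (simp add: zpow_def hom_power[OF h1 hm] qs.coord_power[OF R c])
  qed
  let ?k = "qs.coord sQ B x"
  have "\<phi> x = \<phi> (sQ (qs.scal sQ B x) (\<Prod>b\<in>B. zpow b (?k b)))"
    using qs.rep[OF Q, of x] unfolding expansion_def by metis
  also have "\<dots> = sR (qs.scal sQ B x) (\<Prod>b\<in>B. \<phi> (zpow b (?k b)))"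
    using hs hom_prod[OF h1 hm qs.finB[OF Q]] by metis
  finally have "qs.coord sR C (\<phi> x) c = (\<Sum>b\<in>B. qs.coord sR C (\<phi> (zpow b (?k b))) c)"
    using qs.coord_sc[OF R c] qs.coord_prod[OF R qs.finB[OF Q] c] by metis
  also have "\<dots> = (\<Sum>b\<in>B. ?k b * qs.coord sR C (\<phi> b) c)"
    using zp by (simp cong: sum.cong)
  finally show ?thesis .
qed

lemma iso_card:
  fixes sQ :: "'k::field \<Rightarrow> 'a::comm_monoid_mult \<Rightarrow> 'a"
    and sR :: "'k \<Rightarrow> 'b::comm_monoid_mult \<Rightarrow> 'b"
  assumes Q: "qs sQ B" and R: "qs sR C" and iso: "sm_iso sQ sR \<phi>"
  shows "card B = card C"
proof -
  have bij: "bij \<phi>" and h1: "\<phi> 1 = 1" and hm: "\<forall>x y. \<phi> (x * y) = \<phi> x * \<phi> y"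
    and hs: "\<forall>c x. \<phi> (sQ c x) = sR c (\<phi> x)" using iso unfolding sm_iso_def by auto
  define \<psi> where "\<psi> = inv \<phi>"
  have pp: "\<psi> (\<phi> x) = x" for x using bij unfolding \<psi>_def by (simp add: bij_is_inj)
  have pp2: "\<phi> (\<psi> y) = y" for y using bij unfolding \<psi>_def by (simp add: bij_is_surj surj_f_inv_f)
  have g1: "\<psi> 1 = 1" using pp h1 by metis
  have gm: "\<forall>x y. \<psi> (x * y) = \<psi> x * \<psi> y" using pp pp2 hm by metis
  have gs: "\<forall>c x. \<psi> (sR c x) = sQ c (\<psi> x)" using pp pp2 hs by metis
  define M where "M c b = qs.coord sR C (\<phi> b) c" for c b
  define N where "N b c = qs.coord sQ B (\<psi> c) b" for b c
  have "int (card B) = (\<Sum>b\<in>B. 1)" by simp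
  also have "\<dots> = (\<Sum>b\<in>B. \<Sum>c\<in>C. M c b * N b c)"
  proof (rule sum.cong[OF refl])
    fix b assume b: "b \<in> B"
    have "1 = qs.coord sQ B (\<psi> (\<phi> b)) b" using pp qs.coord_basis[OF Q b b] by simp
    also have "\<dots> = (\<Sum>c\<in>C. M c b * N b c)"
      unfolding M_def N_def by (rule hom_coord[OF R Q g1 gm gs b])
    finally show "1 = (\<Sum>c\<in>C. M c b * N b c)" .
  qed
  also have "\<dots> = (\<Sum>c\<in>C. \<Sum>b\<in>B. N b c * M c b)"
    by (subst sum.swap) (simp add: mult.commute)
  also have "\<dots> = (\<Sum>c\<in>C. 1)"
  proof (rule sum.cong[OF refl])
    fix c assume c: "c \<in> C"
    have "1 = qs.coord sR C (\<phi> (\<psi> c)) c" using pp2 qs.coord_basis[OF R c c] by simp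
    also have "\<dots> = (\<Sum>b\<in>B. N b c * M c b)"
      unfolding M_def N_def by (rule hom_coord[OF Q R h1 hm hs c])
    finally show "(\<Sum>b\<in>B. N b c * M c b) = 1" by simp
  qed
  also have "\<dots> = int (card C)" by simp
  finally show ?thesis by simp
qed


lemma card_iso:
  fixes sQ :: "'k::field \<Rightarrow> 'a::comm_monoid_mult \<Rightarrow> 'a"
    and sR :: "'k \<Rightarrow> 'b::comm_monoid_mult \<Rightarrow> 'b"
  assumes Q: "qs sQ B" and R: "qs sR C" and cd: "card B = card C"
  shows "\<exists>\<phi>. sm_iso sQ sR \<phi>"
proof -
  obtain g where g: "bij_betw g C B"
    using finite_same_card_bij[OF qs.finB[OF R] qs.finB[OF Q]] cd by metis
  define \<phi> where "\<phi> x = expansion sR C (qs.scal sQ B x) (\<lambda>c. qs.coord sQ B x (g c))" for x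
  have gB: "c \<in> C \<Longrightarrow> g c \<in> B" for c using g bij_betwE by blast
  have h1: "\<phi> 1 = 1"
  proof -
    have "\<phi> 1 = expansion sR C 1 (\<lambda>_. 0)"
      unfolding \<phi>_def qs.scal_one[OF Q]
      by (rule qs.exp_cong[OF R]) (simp add: qs.coord_one[OF Q gB])
    then show ?thesis using qs.one_exp[OF R] by simp
  qed
  have hm: "\<phi> (x * y) = \<phi> x * \<phi> y" for x y
  proof -
    have "\<phi> (x * y) = expansion sR C (qs.scal sQ B x * qs.scal sQ B y)
       (\<lambda>c. qs.coord sQ B x (g c) + qs.coord sQ B y (g c))"
      unfolding \<phi>_def qs.scal_mult[OF Q]
      by (rule qs.exp_cong[OF R]) (simp add: qs.coord_mult[OF Q gB])
    then show ?thesis unfolding \<phi>_def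
      using expansion_mult[OF qs.sm[OF R] qs.finB[OF R] qs.invB[OF R]] by metis
  qed
  have hs: "\<phi> (sQ a x) = sR a (\<phi> x)" for a x
  proof -
    have "\<phi> (sQ a x) = expansion sR C (a * qs.scal sQ B x) (\<lambda>c. qs.coord sQ B x (g c))"
      unfolding \<phi>_def qs.scal_sc[OF Q]
      by (rule qs.exp_cong[OF R]) (simp add: qs.coord_sc[OF Q gB])
    then show ?thesis unfolding \<phi>_def expansion_def
      by (simp add: sm_facts(2)[OF qs.sm[OF R]])
  qed
  have inj: "inj \<phi>"
  proof (rule injI)
    fix x y assume "\<phi> x = \<phi> y"
    have sx: "qs.scal sR C (\<phi> z) = qs.scal sQ B z" for z
      unfolding \<phi>_def by (rule qs.scal_exp[OF R])
    have cx: "c \<in> C \<Longrightarrow> qs.coord sR C (\<phi> z) c = qs.coord sQ B z (g c)" for z c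
      unfolding \<phi>_def by (rule qs.coord_exp[OF R])
    have "qs.scal sQ B x = qs.scal sQ B y" using sx \<open>\<phi> x = \<phi> y\<close> by metis
    moreover have "qs.coord sQ B x e = qs.coord sQ B y e" if e: "e \<in> B" for e
    proof -
      obtain c where c: "c \<in> C" "e = g c" using g e bij_betw_imp_surj_on by blast
      show ?thesis using cx[OF c(1), of x] cx[OF c(1), of y] \<open>\<phi> x = \<phi> y\<close> c(2) by simp
    qed
    ultimately show "x = y" using qs.eq_iff[OF Q] by blast
  qed
  have surj: "surj \<phi>"
  proof -
    { fix y
      define h where "h = inv_into C g"
      define x where "x = expansion sQ B (qs.scal sR C y) (\<lambda>b. qs.coord sR C y (h b))"
      have "\<phi> x = expansion sR C (qs.scal sR C y) (\<lambda>c. qs.coord sR C y c)"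
        unfolding \<phi>_def x_def qs.scal_exp[OF Q]
      proof (rule qs.exp_cong[OF R])
        fix c assume c: "c \<in> C"
        have "h (g c) = c" unfolding h_def using g c bij_betw_imp_inj_on inv_into_f_f by metis
        then show "qs.coord sQ B (expansion sQ B (qs.scal sR C y) (\<lambda>b. qs.coord sR C y (h b))) (g c) =
           qs.coord sR C y c" using qs.coord_exp[OF Q gB[OF c]] by simp
      qed
      then have "y = \<phi> x" using qs.rep[OF R, of y] by simp
      then have "y \<in> range \<phi>" by blast }
    then show ?thesis by blast
  qed
  have "sm_iso sQ sR \<phi>" unfolding sm_iso_def bij_def using inj surj h1 hm hs by blast
  then show ?thesis by blast
qed

lemma qs_some:
  assumes "quantity_space sc" shows "qs sc (SOME B. is_basis sc B)"
  using assms unfolding quantity_space_def qs_def by (metis someI_ex)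

theorem proposition3p23:
  fixes sQ :: "'k::field \<Rightarrow> 'a::comm_monoid_mult \<Rightarrow> 'a"
    and sR :: "'k \<Rightarrow> 'b::comm_monoid_mult \<Rightarrow> 'b"
  assumes "quantity_space sQ" and "quantity_space sR"
  shows "(\<exists>\<phi>. sm_iso sQ sR \<phi>) \<longleftrightarrow> qrank sQ = qrank sR"
  using iso_card[OF qs_some[OF assms(1)] qs_some[OF assms(2)]]
    card_iso[OF qs_some[OF assms(1)] qs_some[OF assms(2)]]
  unfolding qrank_def by blast

end
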